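(* Let $U,V$ be nonempty finite words over the alphabet $\{-1,1\}$ and let $W=w_1\cdots w_\ell$ ($\ell\ge1$) be a word over the two-letter alphabet $\{U,V\}$; let $X=w_\ell\cdots w_1$ be the reversed word over $\{U,V\}$. Let $\widetilde W,\widetilde X\in\{-1,1\}^N$ be the words over $\{-1,1\}$ obtained by concatenating the words $U,V$ as they appear in $W$, resp. $X$, where $N=|W|_U|U|+|W|_V|V|$, and regard them as elements of $G_F$, $F=\mathbb Z/N\mathbb Z$. Then $A_F(\widetilde X)=A_F(\widetilde W)$.
   Context: $|W|_U$ denotes the number of occurrences of the letter $U$ in $W$, and $|U|$ the length of $U$. A word $v_1\cdots v_N$ over $\{-1,1\}$ is identified with $\sigma\in G_F=\{-1,1\}^{\mathbb Z/N\mathbb Z}$ by $\sigma_i=v_i$ (indices mod $N$). The correlation map is $A_F(\sigma)_f=\sum_{m\in F}\sigma_m\sigma_{m+f}$. *)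

theory Defs
  imports Main
begin

datatype letter = LU | LV

definition pm_word :: "int list \<Rightarrow> bool" where
  "pm_word s \<longleftrightarrow> set s \<subseteq> {-1, 1}"

definition subst_word :: "int list \<Rightarrow> int list \<Rightarrow> letter list \<Rightarrow> int list" where
  "subst_word U V W = concat (map (\<lambda>c. case c of LU \<Rightarrow> U | LV \<Rightarrow> V) W)"

text \<open>Periodic correlation A_F(sigma)_f = sum over m in Z/NZ of sigma_m sigma_(m+f),
  with N = length s and indices taken mod N (positions 0..N-1 correspond to v_1..v_N).\<close>
definition corr :: "int list \<Rightarrow> nat \<Rightarrow> int" where
  "corr s f = (\<Sum>m<length s. s ! m * s ! ((m + f) mod length s))"

end

theory Submission
  imports Defs
begin


lemma sum_lessThan_add_split:
  fixes g :: "nat \<Rightarrow> 'a::comm_monoid_add"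
  shows "(\<Sum>p<a+b. g p) = (\<Sum>p<a. g p) + (\<Sum>p<b. g (a+p))"
  by (induction b) (simp_all add: add.assoc)

lemma periodic_mod:
  fixes P :: "nat \<Rightarrow> 'a" and n t :: nat
  assumes per: "\<And>t. P (t + n) = P t"
  shows "P (t mod n) = P t"
proof -
  have "P (t mod n + n * q) = P (t mod n)" for q
  proof (induction q)
    case 0 then show ?case by simp
  next
    case (Suc q)
    have "t mod n + n * Suc q = (t mod n + n * q) + n" by simp
    then show ?case using per Suc by metis
  qed
  moreover have "t = t mod n + n * (t div n)" by simp
  ultimately show ?thesis by metis
qed

definition cntP :: "(nat \<Rightarrow> bool) \<Rightarrow> nat \<Rightarrow> nat \<Rightarrow> nat" where
  "cntP P m k = (\<Sum>l<m. if P (k+l) then 1 else 0)"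

lemma cntP_0[simp]: "cntP P 0 k = 0" by (simp add: cntP_def)

lemma cntP_Suc1: "cntP P (Suc m) k = cntP P m k + (if P (k+m) then 1 else 0)"
  by (simp add: cntP_def)

lemma cntP_Suc2: "cntP P (Suc m) k = (if P k then 1 else 0) + cntP P m (Suc k)"
  unfolding cntP_def by (subst sum.lessThan_Suc_shift) simp

lemma cntP_le: "cntP P m k \<le> m"
  by (induction m) (auto simp: cntP_Suc1)

lemma seg_sum:
  "(\<Sum>l<m. (if P (k+l) then \<alpha> else \<beta>)::int) = \<alpha> * int (cntP P m k) + \<beta> * (int m - int (cntP P m k))"
  by (induction m) (auto simp: cntP_Suc1 algebra_simps)

lemma telescope_window:
  fixes P :: "nat \<Rightarrow> bool" and H :: "int \<Rightarrow> int" and \<alpha> \<beta> :: int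
  assumes per: "\<And>t. P (t + n) = P t"
  shows "(\<Sum>k<n. ((if P (k+j) then 1 else 0) - (if P k then 1 else 0)) * H (\<Sum>l<Suc j. if P (k+l) then \<alpha> else \<beta>)) = 0"
proof -
  define \<Phi> where "\<Phi> t = (\<Sum>q<t. H (\<alpha> * int (q+1) + \<beta> * (int j - int q)))" for t
  have T: "((if P (k+j) then 1 else 0) - (if P k then 1 else 0)) * H (\<Sum>l<Suc j. if P (k+l) then \<alpha> else \<beta>)
     = \<Phi> (cntP P j (Suc k)) - \<Phi> (cntP P j k)" for k
  proof -
    have e1: "cntP P (Suc j) k = cntP P j k + (if P (k+j) then 1 else 0)" by (rule cntP_Suc1)
    have e2: "cntP P (Suc j) k = (if P k then 1 else 0) + cntP P j (Suc k)" by (rule cntP_Suc2)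
    have len: "(\<Sum>l<Suc j. if P (k+l) then \<alpha> else \<beta>) = \<alpha> * int (cntP P (Suc j) k) + \<beta> * (int (Suc j) - int (cntP P (Suc j) k))"
      by (rule seg_sum)
    consider "P (k+j) = P k" | "P (k+j)" "\<not> P k" | "\<not> P (k+j)" "P k" by blast
    then show ?thesis
    proof cases
      case 1
      then have "cntP P j (Suc k) = cntP P j k" using e1 e2 by (auto split: if_splits)
      then show ?thesis using 1 by simp
    next
      case 2
      then have c: "cntP P j (Suc k) = cntP P j k + 1" "cntP P (Suc j) k = cntP P j k + 1" using e1 e2 by auto
      have l2: "(\<Sum>l<Suc j. if P (k+l) then \<alpha> else \<beta>) = \<alpha> * int (cntP P j k + 1) + \<beta> * (int j - int (cntP P j k))"
        using len c by simp
      show ?thesis using 2 by (subst l2) (simp add: c \<Phi>_def)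
    next
      case 3
      then have c: "cntP P j k = cntP P j (Suc k) + 1" "cntP P (Suc j) k = cntP P j (Suc k) + 1" using e1 e2 by auto
      have l2: "(\<Sum>l<Suc j. if P (k+l) then \<alpha> else \<beta>) = \<alpha> * int (cntP P j (Suc k) + 1) + \<beta> * (int j - int (cntP P j (Suc k)))"
        using len c by simp
      show ?thesis using 3 by (subst l2) (simp add: c \<Phi>_def)
    qed
  qed
  have "cntP P j n = cntP P j 0"
    unfolding cntP_def using per by (simp add: add.commute)
  moreover have "(\<Sum>k<n. \<Phi> (cntP P j (Suc k)) - \<Phi> (cntP P j k)) = \<Phi> (cntP P j n) - \<Phi> (cntP P j 0)"
    using sum_lessThan_telescope[of "\<lambda>k. \<Phi> (cntP P j k)" n] by simp
  ultimately show ?thesis by (simp only: T)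
qed

lemma sum_rotate:
  fixes g :: "nat \<Rightarrow> 'a::comm_monoid_add"
  assumes "k < n"
  shows "(\<Sum>i<n. g i) = (\<Sum>j<n. g ((k+j) mod n))"
proof (rule sum.reindex_bij_witness[where j="\<lambda>a. (a + n - k) mod n" and i="\<lambda>b. (k+b) mod n"])
  fix a assume a: "a \<in> {..<n}"
  have "(k + (a + n - k) mod n) mod n = (k + (a + n - k)) mod n" by (simp add: mod_add_right_eq)
  also have "k + (a + n - k) = a + n" using assms by simp
  finally show "(k + (a + n - k) mod n) mod n = a" using a by simp
  then show "g ((k + (a + n - k) mod n) mod n) = g a" by simp
  show "(a + n - k) mod n \<in> {..<n}" using assms by simp
next
  fix b assume b: "b \<in> {..<n}"
  show "(k + b) mod n \<in> {..<n}" using assms by simp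
  show "((k + b) mod n + n - k) mod n = b"
  proof (cases "k + b < n")
    case True then show ?thesis using b by simp
  next
    case False
    then have "(k+b) mod n = k + b - n" using b assms by (simp add: mod_if)
    then show ?thesis using False b by simp
  qed
qed

lemma balance_abstract:
  fixes P :: "nat \<Rightarrow> bool" and H :: "int \<Rightarrow> int" and \<alpha> \<beta> :: int
  assumes n: "n > 0" and per: "\<And>t. P (t + n) = P t"
    and s_def: "s = (\<lambda>t. \<Sum>l<t. if P l then \<alpha> else \<beta>)"
    and Hper: "\<And>x. H (x + s n) = H x"
  shows "(\<Sum>k<n. \<Sum>i<n. ((if P i then 1 else 0) - (if P k then 1 else 0)) * H (s (Suc i) - s k)) = 0"
proof -
  have sper: "s (t + n) = s t + s n" for t
  proof (induction t)
    case 0 then show ?case by (simp add: s_def)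
  next
    case (Suc t)
    have "s (Suc t + n) = s (t + n) + (if P (t+n) then \<alpha> else \<beta>)" by (simp add: s_def)
    also have "\<dots> = s (Suc t) + s n" using Suc per by (simp add: s_def)
    finally show ?case .
  qed
  have sseg: "s (k + m) - s k = (\<Sum>l<m. if P (k+l) then \<alpha> else \<beta>)" for k m
    by (induction m) (simp_all add: s_def)
  have inner: "(\<Sum>i<n. ((if P i then 1 else 0) - (if P k then 1 else 0)) * H (s (Suc i) - s k))
     = (\<Sum>j<n. ((if P (k+j) then 1 else 0) - (if P k then 1 else 0)) * H (\<Sum>l<Suc j. if P (k+l) then \<alpha> else \<beta>))"
    if k: "k < n" for k
  proof -
    have "(\<Sum>i<n. ((if P i then 1 else 0) - (if P k then 1 else 0)) * H (s (Suc i) - s k))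
      = (\<Sum>j<n. ((if P ((k+j) mod n) then 1 else 0) - (if P k then 1 else 0)) * H (s (Suc ((k+j) mod n)) - s k))"
      by (rule sum_rotate[OF k])
    also have "\<dots> = (\<Sum>j<n. ((if P (k+j) then 1 else 0) - (if P k then 1 else 0)) * H (\<Sum>l<Suc j. if P (k+l) then \<alpha> else \<beta>))"
    proof (rule sum.cong[OF refl])
      fix j assume j: "j \<in> {..<n}"
      have pm: "P ((k+j) mod n) = P (k+j)" using periodic_mod[of P n, OF per] by blast
      have hs: "H (s (Suc ((k+j) mod n)) - s k) = H (s (k + Suc j) - s k)"
      proof (cases "k + j < n")
        case True then show ?thesis by simp
      next
        case False
        then have m: "(k+j) mod n = k + j - n" using j k by (simp add: mod_if)
        have "s (k + Suc j) = s (Suc (k + j - n) + n)" using False by (simp add: Suc_diff_le)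
        also have "\<dots> = s (Suc (k+j-n)) + s n" by (rule sper)
        finally have "s (k + Suc j) - s k = (s (Suc ((k+j) mod n)) - s k) + s n" using m by simp
        then show ?thesis by (metis Hper)
      qed
      show "((if P ((k+j) mod n) then 1 else 0) - (if P k then 1 else 0)) * H (s (Suc ((k+j) mod n)) - s k)
         = ((if P (k+j) then 1 else 0) - (if P k then 1 else 0)) * H (\<Sum>l<Suc j. if P (k+l) then \<alpha> else \<beta>)"
        using pm hs sseg[of k "Suc j"] by simp
    qed
    finally show ?thesis .
  qed
  have "(\<Sum>k<n. \<Sum>i<n. ((if P i then 1 else 0) - (if P k then 1 else 0)) * H (s (Suc i) - s k))
     = (\<Sum>k<n. \<Sum>j<n. ((if P (k+j) then 1 else 0) - (if P k then 1 else 0)) * H (\<Sum>l<Suc j. if P (k+l) then \<alpha> else \<beta>))"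
    using inner by simp
  also have "\<dots> = (\<Sum>j<n. \<Sum>k<n. ((if P (k+j) then 1 else 0) - (if P k then 1 else 0)) * H (\<Sum>l<Suc j. if P (k+l) then \<alpha> else \<beta>))"
    by (rule sum.swap)
  also have "\<dots> = 0" using telescope_window[of P n, OF per] by simp
  finally show ?thesis .
qed



definition pre :: "'a list list \<Rightarrow> nat \<Rightarrow> nat" where
  "pre xs i = (\<Sum>l<i. length (xs!l))"

lemma pre_Cons_Suc: "pre (a#xs) (Suc i) = length a + pre xs i"
  unfolding pre_def by (subst sum.lessThan_Suc_shift) simp

lemma pre_0[simp]: "pre xs 0 = 0" by (simp add: pre_def)

lemma concat_sum:
  fixes g :: "nat \<Rightarrow> 'b::comm_monoid_add"
  shows "(\<Sum>p<length (concat xs). g p) = (\<Sum>i<length xs. \<Sum>x<length (xs!i). g (pre xs i + x))"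
proof (induction xs arbitrary: g)
  case Nil then show ?case by simp
next
  case (Cons a xs)
  have "(\<Sum>p<length (concat (a#xs)). g p) = (\<Sum>p<length a. g p) + (\<Sum>p<length (concat xs). g (length a + p))"
    by (simp add: sum_lessThan_add_split)
  also have "(\<Sum>p<length (concat xs). g (length a + p)) = (\<Sum>i<length xs. \<Sum>x<length (xs!i). g (length a + (pre xs i + x)))"
    by (rule Cons.IH)
  finally show ?case
    by (simp add: sum.lessThan_Suc_shift pre_Cons_Suc add.assoc del: sum.lessThan_Suc)
qed

lemma concat_nth_pre:
  assumes "i < length xs" "x < length (xs!i)"
  shows "concat xs ! (pre xs i + x) = xs!i!x"
  using assms
proof (induction xs arbitrary: i)
  case Nil then show ?case by simp
next
  case (Cons a xs)
  show ?case
  proof (cases i)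
    case 0 then show ?thesis using Cons.prems by (simp add: nth_append)
  next
    case (Suc i')
    then show ?thesis using Cons by (simp add: pre_Cons_Suc nth_append)
  qed
qed

definition dlt :: "nat \<Rightarrow> int \<Rightarrow> int" where
  "dlt N r = (if r mod int N = 0 then 1 else 0)"

lemma dlt_per: "dlt N (r + int N) = dlt N r"
  by (simp add: dlt_def)

lemma corr_double:
  assumes N: "length s > 0"
  shows "corr s f = (\<Sum>p<length s. \<Sum>q<length s. s!p * s!q * dlt (length s) (int p + int f - int q))"
proof -
  let ?N = "length s"
  have inner: "(\<Sum>q<?N. s!p * s!q * dlt ?N (int p + int f - int q)) = s!p * s!((p+f) mod ?N)" for p
  proof -
    have d: "dlt ?N (int p + int f - int q) = (if q = (p+f) mod ?N then 1 else 0)" if q: "q < ?N" for q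
    proof -
      have "(int p + int f - int q) mod int ?N = 0 \<longleftrightarrow> int (p+f) mod int ?N = int q mod int ?N"
        by (simp add: mod_eq_dvd_iff dvd_eq_mod_eq_0)
      also have "\<dots> \<longleftrightarrow> (p+f) mod ?N = q" using q
        by (metis mod_less of_nat_eq_iff of_nat_mod)
      finally show ?thesis by (auto simp: dlt_def)
    qed
    have "(\<Sum>q<?N. s!p * s!q * dlt ?N (int p + int f - int q)) = (\<Sum>q<?N. if q = (p+f) mod ?N then s!p * s!q else 0)"
      by (rule sum.cong) (auto simp: d)
    also have "\<dots> = s!p * s!((p+f) mod ?N)" using N by (simp add: sum.delta')
    finally show ?thesis .
  qed
  show ?thesis unfolding corr_def using inner by simp
qed



definition blkw :: "int list \<Rightarrow> int list \<Rightarrow> letter \<Rightarrow> int list" where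
  "blkw U V c = (case c of LU \<Rightarrow> U | LV \<Rightarrow> V)"

definition Sw :: "int list \<Rightarrow> int list \<Rightarrow> letter list \<Rightarrow> nat \<Rightarrow> int" where
  "Sw U V w i = (\<Sum>l<i. int (length (blkw U V (w!l))))"

definition Kc :: "int list \<Rightarrow> int list \<Rightarrow> nat \<Rightarrow> nat \<Rightarrow> letter \<Rightarrow> letter \<Rightarrow> int \<Rightarrow> int" where
  "Kc U V N f c1 c2 r = (\<Sum>x<length (blkw U V c1). \<Sum>y<length (blkw U V c2).
      blkw U V c1 ! x * blkw U V c2 ! y * dlt N (r + int x + int f - int y))"

lemma subst_blkw: "subst_word U V w = concat (map (blkw U V) w)"
  unfolding subst_word_def blkw_def by simp

lemma pre_Sw: "i \<le> length w \<Longrightarrow> int (pre (map (blkw U V) w) i) = Sw U V w i"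
  unfolding pre_def Sw_def by (simp add: of_nat_sum)

lemma corr_blocks:
  assumes N: "length (subst_word U V w) > 0"
  shows "corr (subst_word U V w) f = (\<Sum>i<length w. \<Sum>k<length w.
     Kc U V (length (subst_word U V w)) f (w!i) (w!k) (Sw U V w i - Sw U V w k))"
proof -
  define xs where "xs = map (blkw U V) w"
  define N where "N = length (subst_word U V w)"
  define \<sigma> where "\<sigma> = subst_word U V w"
  have \<sigma>: "\<sigma> = concat xs" unfolding \<sigma>_def xs_def by (rule subst_blkw)
  have lxs: "length xs = length w" unfolding xs_def by simp
  have NN: "N = length (concat xs)" unfolding N_def using \<sigma> \<sigma>_def by simp
  define F where "F p q = \<sigma>!p * \<sigma>!q * dlt N (int p + int f - int q)" for p q
  have "corr \<sigma> f = (\<Sum>p<N. \<Sum>q<N. F p q)"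
    unfolding F_def N_def \<sigma>_def using corr_double[OF N] by simp
  also have "\<dots> = (\<Sum>p<N. \<Sum>k<length xs. \<Sum>y<length (xs!k). F p (pre xs k + y))"
    unfolding NN by (rule sum.cong[OF refl]) (rule concat_sum)
  also have "\<dots> = (\<Sum>i<length xs. \<Sum>x<length (xs!i). \<Sum>k<length xs. \<Sum>y<length (xs!k). F (pre xs i + x) (pre xs k + y))"
    unfolding NN by (rule concat_sum)
  also have "\<dots> = (\<Sum>i<length xs. \<Sum>k<length xs. \<Sum>x<length (xs!i). \<Sum>y<length (xs!k). F (pre xs i + x) (pre xs k + y))"
    by (rule sum.cong[OF refl]) (rule sum.swap)
  also have "\<dots> = (\<Sum>i<length w. \<Sum>k<length w.
     Kc U V N f (w!i) (w!k) (Sw U V w i - Sw U V w k))"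
  proof (rule sum.cong[OF lxs[THEN arg_cong[where f="\<lambda>n. {..<n}"]]], rule sum.cong[OF lxs[THEN arg_cong[where f="\<lambda>n. {..<n}"]]])
    fix i k assume i: "i \<in> {..<length w}" and k: "k \<in> {..<length w}"
    have xi: "xs!i = blkw U V (w!i)" "xs!k = blkw U V (w!k)" using i k unfolding xs_def by auto
    have si: "int (pre xs i) = Sw U V w i" "int (pre xs k) = Sw U V w k"
      using i k pre_Sw[of i w U V] pre_Sw[of k w U V] unfolding xs_def by auto
    show "(\<Sum>x<length (xs!i). \<Sum>y<length (xs!k). F (pre xs i + x) (pre xs k + y))
        = Kc U V N f (w!i) (w!k) (Sw U V w i - Sw U V w k)"
      unfolding Kc_def xi(1)[symmetric] xi(2)[symmetric]
    proof (rule sum.cong[OF refl], rule sum.cong[OF refl])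
      fix x y assume x: "x \<in> {..<length (xs!i)}" and y: "y \<in> {..<length (xs!k)}"
      have a: "\<sigma>!(pre xs i + x) = xs!i ! x"
        using concat_nth_pre[of i xs x] i x lxs \<sigma> by simp
      have b: "\<sigma>!(pre xs k + y) = xs!k ! y"
        using concat_nth_pre[of k xs y] k y lxs \<sigma> by simp
      have c: "int (pre xs i + x) + int f - int (pre xs k + y) = Sw U V w i - Sw U V w k + int x + int f - int y"
        using si by simp
      show "F (pre xs i + x) (pre xs k + y) = xs!i ! x * xs!k ! y * dlt N (Sw U V w i - Sw U V w k + int x + int f - int y)"
        unfolding F_def a b c ..
    qed
  qed
  finally show ?thesis unfolding \<sigma>_def N_def .
qed



lemma Sw_Suc: "Sw U V w (Suc i) = Sw U V w i + int (length (blkw U V (w!i)))"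
  by (simp add: Sw_def)

lemma Sw_0[simp]: "Sw U V w 0 = 0" by (simp add: Sw_def)

lemma len_concat_pre: "length (concat xs) = pre xs (length xs)"
  by (induction xs) (simp_all add: pre_Cons_Suc)

lemma len_subst: "int (length (subst_word U V w)) = Sw U V w (length w)"
  using pre_Sw[of "length w" w U V] by (simp add: subst_blkw len_concat_pre)

lemma Sw_rev: "i \<le> length w \<Longrightarrow> Sw U V (rev w) i = Sw U V w (length w) - Sw U V w (length w - i)"
proof (induction i)
  case 0 then show ?case by simp
next
  case (Suc i)
  then have i: "i < length w" by simp
  have e: "length w - i = Suc (length w - Suc i)" using i by simp
  show ?case using Suc i by (simp add: Sw_Suc rev_nth e)
qed

lemma letter_other: "x \<noteq> ca \<Longrightarrow> ca \<noteq> cb \<Longrightarrow> x = (cb::letter)"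
  by (cases x; cases ca; cases cb) auto

lemma key:
  fixes G :: "int \<Rightarrow> int"
  assumes n: "length w > 0" and Gper: "\<And>x. G (x + Sw U V w (length w)) = G x"
  shows "(\<Sum>i<length w. \<Sum>k<length w. if w!i = ca \<and> w!k = cb then G (Sw U V w (Suc k) - Sw U V w (Suc i)) else 0)
       = (\<Sum>i<length w. \<Sum>k<length w. if w!i = ca \<and> w!k = cb then G (Sw U V w i - Sw U V w k) else 0)"
proof (cases "ca = cb")
  case True
  have "(\<Sum>i<length w. \<Sum>k<length w. if w!i = ca \<and> w!k = cb then G (Sw U V w (Suc k) - Sw U V w (Suc i)) else 0)
      = (\<Sum>i<length w. \<Sum>k<length w. if w!k = ca \<and> w!i = ca then G (Sw U V w k - Sw U V w i) else 0)"
    using True by (intro sum.cong refl) (auto simp: Sw_Suc)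
  also have "\<dots> = (\<Sum>k<length w. \<Sum>i<length w. if w!k = ca \<and> w!i = ca then G (Sw U V w k - Sw U V w i) else 0)"
    by (rule sum.swap)
  finally show ?thesis using True by simp
next
  case False
  let ?n = "length w"
  let ?S = "Sw U V w"
  define a where "a i = (if w!i = ca then 1 else 0::int)" for i
  define L1 where "L1 = int (length (blkw U V ca))"
  define L2 where "L2 = int (length (blkw U V cb))"
  define Hf where "Hf x = G (x - L1)" for x
  have RHS: "(\<Sum>i<?n. \<Sum>k<?n. if w!i = ca \<and> w!k = cb then G (?S i - ?S k) else 0)
     = (\<Sum>i<?n. \<Sum>k<?n. a i * (1 - a k) * Hf (?S (Suc i) - ?S k))"
  proof (intro sum.cong refl)
    fix i k
    show "(if w!i = ca \<and> w!k = cb then G (?S i - ?S k) else 0) = a i * (1 - a k) * Hf (?S (Suc i) - ?S k)"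
    proof (cases "w!i = ca")
      case T: True
      show ?thesis
      proof (cases "w!k = cb")
        case True
        then have nk: "w!k \<noteq> ca" using False by auto
        have eq: "?S (Suc i) - ?S k - L1 = ?S i - ?S k" using T by (simp add: Sw_Suc L1_def)
        have hh: "Hf (?S (Suc i) - ?S k) = G (?S i - ?S k)" unfolding Hf_def by (simp only: eq)
        show ?thesis using T True nk by (simp add: a_def hh)
      next
        case F2: False
        then have "w!k = ca" using letter_other[of "w!k" cb ca] False by auto
        then show ?thesis using F2 by (simp add: a_def)
      qed
    next
      case False
      then show ?thesis by (simp add: a_def)
    qed
  qed
  have LHS: "(\<Sum>i<?n. \<Sum>k<?n. if w!i = ca \<and> w!k = cb then G (?S (Suc k) - ?S (Suc i)) else 0)
     = (\<Sum>i<?n. \<Sum>k<?n. a i * (1 - a k) * Hf (?S (Suc k) - ?S i))"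
  proof (intro sum.cong refl)
    fix i k
    show "(if w!i = ca \<and> w!k = cb then G (?S (Suc k) - ?S (Suc i)) else 0) = a i * (1 - a k) * Hf (?S (Suc k) - ?S i)"
    proof (cases "w!i = ca")
      case T: True
      show ?thesis
      proof (cases "w!k = cb")
        case True
        then have nk: "w!k \<noteq> ca" using False by auto
        have eq: "?S (Suc k) - ?S i - L1 = ?S (Suc k) - ?S (Suc i)" using T by (simp add: Sw_Suc L1_def)
        have hh: "Hf (?S (Suc k) - ?S i) = G (?S (Suc k) - ?S (Suc i))" unfolding Hf_def by (simp only: eq)
        show ?thesis using T True nk by (simp add: a_def hh)
      next
        case F2: False
        then have "w!k = ca" using letter_other[of "w!k" cb ca] False by auto
        then show ?thesis using F2 by (simp add: a_def)
      qed
    next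
      case False
      then show ?thesis by (simp add: a_def)
    qed
  qed
  also have "\<dots> = (\<Sum>k<?n. \<Sum>i<?n. a i * (1 - a k) * Hf (?S (Suc k) - ?S i))"
    by (rule sum.swap)
  finally have LHS2: "(\<Sum>i<?n. \<Sum>k<?n. if w!i = ca \<and> w!k = cb then G (?S (Suc k) - ?S (Suc i)) else 0)
     = (\<Sum>i<?n. \<Sum>k<?n. a k * (1 - a i) * Hf (?S (Suc i) - ?S k))" .
  define P where "P t = (w!(t mod ?n) = ca)" for t
  define s where "s = (\<lambda>t. \<Sum>l<t. if P l then L1 else L2)"
  have per: "P (t + ?n) = P t" for t unfolding P_def by simp
  have sS: "s t = ?S t" if "t \<le> ?n" for t
    unfolding s_def Sw_def
  proof (rule sum.cong[OF refl])
    fix l assume "l \<in> {..<t}"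
    then have l: "l < ?n" using that by simp
    show "(if P l then L1 else L2) = int (length (blkw U V (w ! l)))"
    proof (cases "w!l = ca")
      case True then show ?thesis using l by (simp add: P_def L1_def)
    next
      case F: False
      then have "w!l = cb" using letter_other[of "w!l" ca cb] False by blast
      then show ?thesis using l F by (simp add: P_def L2_def)
    qed
  qed
  have Hper: "Hf (x + s ?n) = Hf x" for x
    using Gper[of "x - L1"] sS[of ?n] by (simp add: Hf_def algebra_simps)
  have bal: "(\<Sum>k<?n. \<Sum>i<?n. ((if P i then 1 else 0) - (if P k then 1 else 0)) * Hf (s (Suc i) - s k)) = 0"
    by (rule balance_abstract[where P=P and n="length w" and s=s and ?\<alpha>=L1 and ?\<beta>=L2 and H=Hf, OF n per s_def Hper])
  have bal2: "(\<Sum>i<?n. \<Sum>k<?n. (a i - a k) * Hf (?S (Suc i) - ?S k)) = 0"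
  proof -
    have "(\<Sum>i<?n. \<Sum>k<?n. (a i - a k) * Hf (?S (Suc i) - ?S k))
        = (\<Sum>k<?n. \<Sum>i<?n. (a i - a k) * Hf (?S (Suc i) - ?S k))" by (rule sum.swap)
    also have "\<dots> = (\<Sum>k<?n. \<Sum>i<?n. ((if P i then 1 else 0) - (if P k then 1 else 0)) * Hf (s (Suc i) - s k))"
    proof (intro sum.cong refl)
      fix k i assume k: "k \<in> {..<?n}" and i: "i \<in> {..<?n}"
      then show "(a i - a k) * Hf (?S (Suc i) - ?S k) = ((if P i then 1 else 0) - (if P k then 1 else 0)) * Hf (s (Suc i) - s k)"
        using sS[of "Suc i"] sS[of k] by (simp add: a_def P_def)
    qed
    finally show ?thesis using bal by simp
  qed
  have "(\<Sum>i<?n. \<Sum>k<?n. a i * (1 - a k) * Hf (?S (Suc i) - ?S k))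
      - (\<Sum>i<?n. \<Sum>k<?n. a k * (1 - a i) * Hf (?S (Suc i) - ?S k))
      = (\<Sum>i<?n. \<Sum>k<?n. (a i - a k) * Hf (?S (Suc i) - ?S k))"
    unfolding sum_subtractf[symmetric]
    by (intro sum.cong refl) (simp add: algebra_simps)
  then show ?thesis using RHS LHS2 bal2 by simp
qed

lemma split_letters:
  fixes F :: "letter \<Rightarrow> letter \<Rightarrow> int"
  shows "F a b = (if a = LU \<and> b = LU then F LU LU else 0) + (if a = LU \<and> b = LV then F LU LV else 0)
     + (if a = LV \<and> b = LU then F LV LU else 0) + (if a = LV \<and> b = LV then F LV LV else 0)"
  by (cases a; cases b) auto

lemma key_all:
  fixes Gf :: "letter \<Rightarrow> letter \<Rightarrow> int \<Rightarrow> int"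
  assumes n: "length w > 0" and Gper: "\<And>ca cb x. Gf ca cb (x + Sw U V w (length w)) = Gf ca cb x"
  shows "(\<Sum>i<length w. \<Sum>k<length w. Gf (w!i) (w!k) (Sw U V w (Suc k) - Sw U V w (Suc i)))
       = (\<Sum>i<length w. \<Sum>k<length w. Gf (w!i) (w!k) (Sw U V w i - Sw U V w k))"
proof -
  have sp: "Gf (w!i) (w!k) r = (if w!i = LU \<and> w!k = LU then Gf LU LU r else 0) + (if w!i = LU \<and> w!k = LV then Gf LU LV r else 0)
     + (if w!i = LV \<and> w!k = LU then Gf LV LU r else 0) + (if w!i = LV \<and> w!k = LV then Gf LV LV r else 0)" for i k r
    using split_letters[of "\<lambda>a b. Gf a b r" "w!i" "w!k"] by simp
  show ?thesis
    apply (subst (1 2) sp)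
    apply (simp only: sum.distrib)
    using key[where G="Gf LU LU" and ca=LU and cb=LU, OF n Gper] key[where G="Gf LU LV" and ca=LU and cb=LV, OF n Gper] key[where G="Gf LV LU" and ca=LV and cb=LU, OF n Gper] key[where G="Gf LV LV" and ca=LV and cb=LV, OF n Gper]
    by simp
qed



theorem mainTheorem8:
  fixes U V :: "int list" and W :: "letter list"
  assumes "pm_word U" and "pm_word V"
    and "U \<noteq> []" and "V \<noteq> []"
    and "W \<noteq> []"
  shows "length (subst_word U V (rev W)) = length (subst_word U V W)
    \<and> (\<forall>f < length (subst_word U V W).
         corr (subst_word U V (rev W)) f = corr (subst_word U V W) f)"
proof -
  let ?n = "length W"
  let ?S = "Sw U V W"
  have n: "?n > 0" using assms(5) by simp
  have lenrev: "length (subst_word U V (rev W)) = length (subst_word U V W)"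
  proof -
    have "int (length (subst_word U V (rev W))) = Sw U V (rev W) ?n"
      using len_subst[of U V "rev W"] by simp
    also have "\<dots> = ?S ?n" using Sw_rev[of ?n W U V] by simp
    also have "\<dots> = int (length (subst_word U V W))" using len_subst[of U V W] by simp
    finally show ?thesis by simp
  qed
  define N where "N = length (subst_word U V W)"
  have Npos: "N > 0"
  proof -
    obtain c W' where W: "W = c # W'" using assms(5) by (cases W) auto
    have "length (blkw U V c) > 0" using assms(3,4) by (cases c) (auto simp: blkw_def)
    then show ?thesis unfolding N_def subst_blkw W by simp
  qed
  have NS: "int N = ?S ?n" unfolding N_def by (rule len_subst)
  have corr_eq: "corr (subst_word U V (rev W)) f = corr (subst_word U V W) f" for f
  proof -
    let ?K = "Kc U V N f"
    have "corr (subst_word U V (rev W)) f = (\<Sum>i<?n. \<Sum>k<?n.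
        ?K (rev W!i) (rev W!k) (Sw U V (rev W) i - Sw U V (rev W) k))"
      using corr_blocks[of U V "rev W" f] lenrev Npos by (simp add: N_def)
    also have "\<dots> = (\<Sum>i<?n. \<Sum>k<?n. ?K (W!(?n - Suc i)) (W!(?n - Suc k)) (?S (Suc (?n - Suc k)) - ?S (Suc (?n - Suc i))))"
    proof (intro sum.cong refl)
      fix i k assume i: "i \<in> {..<?n}" and k: "k \<in> {..<?n}"
      have e: "?n - i = Suc (?n - Suc i)" "?n - k = Suc (?n - Suc k)" using i k by auto
      show "?K (rev W!i) (rev W!k) (Sw U V (rev W) i - Sw U V (rev W) k)
         = ?K (W!(?n - Suc i)) (W!(?n - Suc k)) (?S (Suc (?n - Suc k)) - ?S (Suc (?n - Suc i)))"
        using i k Sw_rev[of i W U V] Sw_rev[of k W U V] e by (simp add: rev_nth)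
    qed
    also have "\<dots> = (\<Sum>i<?n. \<Sum>k<?n. ?K (W!(?n - Suc i)) (W!k) (?S (Suc k) - ?S (Suc (?n - Suc i))))"
      by (rule sum.cong[OF refl]) (rule sum.nat_diff_reindex)
    also have "\<dots> = (\<Sum>i<?n. \<Sum>k<?n. ?K (W!i) (W!k) (?S (Suc k) - ?S (Suc i)))"
      by (rule sum.nat_diff_reindex[where g="\<lambda>i. \<Sum>k<?n. ?K (W!i) (W!k) (?S (Suc k) - ?S (Suc i))"])
    also have "\<dots> = (\<Sum>i<?n. \<Sum>k<?n. ?K (W!i) (W!k) (?S i - ?S k))"
    proof (rule key_all[OF n])
      fix c1 c2 x
      show "?K c1 c2 (x + ?S ?n) = ?K c1 c2 x"
        unfolding Kc_def NS[symmetric]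
      proof (intro sum.cong refl)
        fix a b
        have "x + int N + int a + int f - int b = (x + int a + int f - int b) + int N" by simp
        then show "blkw U V c1 ! a * blkw U V c2 ! b * dlt N (x + int N + int a + int f - int b)
          = blkw U V c1 ! a * blkw U V c2 ! b * dlt N (x + int a + int f - int b)"
          by (simp only: dlt_per)
      qed
    qed
    also have "\<dots> = corr (subst_word U V W) f"
      using corr_blocks[of U V W f] Npos by (simp add: N_def)
    finally show ?thesis .
  qed
  show ?thesis using lenrev corr_eq by simp
qed

end
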